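(* For every integer $n\ge 10$ and every integer $m$ with $3n-11\le m\le \left\lfloor \frac{n-1}{2} \right\rfloor \left\lceil \frac{n-1}{2} \right\rceil +2$, there exists a non-bipartite $K_4^-$-saturated graph with $n$ vertices and $m$ edges.
   Context: All graphs are finite and simple. $K_4^-$ denotes the graph obtained from the complete graph $K_4$ by deleting one edge. For a graph $H$, a graph $G$ is $H$-saturated if $G$ contains no copy of $H$ as a subgraph, but for every pair of nonadjacent vertices $u,v$ of $G$, the graph $G+uv$ contains at least one copy of $H$. This is part (b) of the theorem. *)

theory Defs
  imports Main
begin

definition simple_graph :: "'a set \<Rightarrow> 'a set set \<Rightarrow> bool" where
  "simple_graph V E \<longleftrightarrow> finite V \<and>
     (\<forall>e\<in>E. \<exists>u v. u \<in> V \<and> v \<in> V \<and> u \<noteq> v \<and> e = {u, v})"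

definition contains_K4_minus :: "'a set \<Rightarrow> 'a set set \<Rightarrow> bool" where
  "contains_K4_minus V E \<longleftrightarrow>
     (\<exists>a b c d. a \<in> V \<and> b \<in> V \<and> c \<in> V \<and> d \<in> V \<and> distinct [a, b, c, d] \<and>
        {a, b} \<in> E \<and> {a, c} \<in> E \<and> {a, d} \<in> E \<and> {b, c} \<in> E \<and> {b, d} \<in> E)"

definition K4_minus_saturated :: "'a set \<Rightarrow> 'a set set \<Rightarrow> bool" where
  "K4_minus_saturated V E \<longleftrightarrow> \<not> contains_K4_minus V E \<and>
     (\<forall>u\<in>V. \<forall>v\<in>V. u \<noteq> v \<and> {u, v} \<notin> E \<longrightarrow> contains_K4_minus V (insert {u, v} E))"

definition bipartite :: "'a set \<Rightarrow> 'a set set \<Rightarrow> bool" where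
  "bipartite V E \<longleftrightarrow> (\<exists>A B. A \<inter> B = {} \<and> A \<union> B = V \<and>
     (\<forall>e\<in>E. card (e \<inter> A) = 1 \<and> card (e \<inter> B) = 1))"

end

theory Submission
  imports Defs
begin

definition cl :: "nat \<Rightarrow> nat \<Rightarrow> nat \<Rightarrow> nat" where
  "cl p a v = (if v = 0 then 0 else if v = 1 then 1 else if v = 2 then 2 else if v \<le> p then 3
     else if v = p+1 then 4 else if v = p+2 then 5 else if v \<le> p+a then 6 else 7)"

definition AC :: "(nat \<times> nat) set" where
  "AC = {(0,1),(0,2),(0,4),(0,5),(0,6),(1,4),(1,7),(2,5),(2,7),(3,4),(3,5),(3,6),(3,7)}"

definition adjc :: "nat \<Rightarrow> nat \<Rightarrow> bool" where
  "adjc i j \<longleftrightarrow> (i,j) \<in> AC \<or> (j,i) \<in> AC"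

definition Eg :: "nat \<Rightarrow> nat \<Rightarrow> nat \<Rightarrow> nat set set" where
  "Eg n p a = {{x,y} | x y. x < n \<and> y < n \<and> adjc (cl p a x) (cl p a y)}"

lemma adjc_sym: "adjc i j = adjc j i" by (auto simp: adjc_def)
lemma adjc_irr: "\<not> adjc i i" by (auto simp: adjc_def AC_def)

lemma mem_Eg: "{x,y} \<in> Eg n p a \<longleftrightarrow> x < n \<and> y < n \<and> adjc (cl p a x) (cl p a y)"
proof
  assume "{x,y} \<in> Eg n p a"
  then obtain u v where h: "{x,y} = {u,v}" "u < n" "v < n" "adjc (cl p a u) (cl p a v)"
    unfolding Eg_def by blast
  from h(1) have "(x = u \<and> y = v) \<or> (x = v \<and> y = u)" by (simp add: doubleton_eq_iff)
  then show "x < n \<and> y < n \<and> adjc (cl p a x) (cl p a y)" using h(2-4) adjc_sym by blast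
next
  assume "x < n \<and> y < n \<and> adjc (cl p a x) (cl p a y)"
  then show "{x,y} \<in> Eg n p a" unfolding Eg_def by blast
qed

lemma class_tri0: "adjc i j \<Longrightarrow> adjc i k \<longrightarrow> adjc i l \<longrightarrow> adjc j k \<longrightarrow> adjc j l \<longrightarrow> k = l \<and> k \<in> {0,1,2,4,5}"
  apply (unfold adjc_def[of i j] AC_def)
  apply (simp only: insert_iff empty_iff prod.inject)
  apply (elim disjE conjE)
  apply (simp_all add: adjc_def AC_def)
  done

lemma class_tri:
   "k = l \<and> k \<in> {0,1,2,4,5}" if "adjc i j" "adjc i k" "adjc i l" "adjc j k" "adjc j l"
  using class_tri0[OF that(1)] that(2-5) by blast

lemma cl_single_aux:
  "v \<noteq> 0 \<Longrightarrow> cl p a v \<noteq> 0" "v \<noteq> 1 \<Longrightarrow> cl p a v \<noteq> 1" "v \<noteq> 2 \<Longrightarrow> cl p a v \<noteq> 2"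
  "v \<noteq> p+1 \<Longrightarrow> cl p a v \<noteq> 4" "v \<noteq> p+2 \<Longrightarrow> cl p a v \<noteq> 5"
  unfolding cl_def by simp_all

lemma cl_single:
  "cl p a v = 0 \<Longrightarrow> v = 0" "cl p a v = 1 \<Longrightarrow> v = 1" "cl p a v = 2 \<Longrightarrow> v = 2"
    "cl p a v = 4 \<Longrightarrow> v = p+1" "cl p a v = 5 \<Longrightarrow> v = p+2"
  using cl_single_aux by blast+

lemma cl_vals:
  assumes "p \<ge> 4" "a \<ge> 2"
  shows "cl p a 0 = 0" "cl p a 1 = 1" "cl p a 2 = 2" "cl p a 3 = 3" "cl p a 4 = 3"
    "cl p a (p+1) = 4" "cl p a (p+2) = 5" "cl p a (Suc p) = 4" "cl p a (Suc (Suc p)) = 5" "cl p a (Suc 0) = 1"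
  using assms by (auto simp: cl_def)

lemma cl_lt: "cl p a v < 8" by (simp add: cl_def)

lemma K4free:
  assumes "p \<ge> 4" "a \<ge> 2"
  shows "\<not> contains_K4_minus {0..<n} (Eg n p a)"
proof
  assume "contains_K4_minus {0..<n} (Eg n p a)"
  then obtain x y c d where h: "distinct [x,y,c,d]"
    "adjc (cl p a x) (cl p a y)" "adjc (cl p a x) (cl p a c)" "adjc (cl p a x) (cl p a d)"
    "adjc (cl p a y) (cl p a c)" "adjc (cl p a y) (cl p a d)"
    unfolding contains_K4_minus_def mem_Eg by blast
  from class_tri[OF h(2-6)] have "cl p a c = cl p a d" "cl p a c \<in> {0,1,2,4,5}" by auto
  then have "c = d" using cl_single[of p a c] cl_single[of p a d] by auto
  then show False using h(1) by simp
qed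

lemma patS:
  assumes "u < n" "v < n" "c < n" "d < n" "c \<noteq> d"
    "adjc (cl p a u) (cl p a c)" "adjc (cl p a u) (cl p a d)"
    "adjc (cl p a v) (cl p a c)" "adjc (cl p a v) (cl p a d)" "u \<noteq> v"
  shows "contains_K4_minus {0..<n} (insert {u,v} (Eg n p a))"
proof -
  have "u \<noteq> c" "u \<noteq> d" "v \<noteq> c" "v \<noteq> d" using assms adjc_irr by metis+
  moreover have "adjc (cl p a c) (cl p a u)" "adjc (cl p a d) (cl p a u)"
    "adjc (cl p a c) (cl p a v)" "adjc (cl p a d) (cl p a v)" using assms adjc_sym by metis+
  ultimately show ?thesis unfolding contains_K4_minus_def
    apply (rule_tac x=u in exI, rule_tac x=v in exI, rule_tac x=c in exI, rule_tac x=d in exI)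
    using assms by (auto simp: mem_Eg)
qed

lemma patT:
  assumes "u < n" "v < n" "w < n" "t < n" "v \<noteq> t" "u \<noteq> v"
    "adjc (cl p a u) (cl p a w)" "adjc (cl p a u) (cl p a t)"
    "adjc (cl p a w) (cl p a v)" "adjc (cl p a w) (cl p a t)"
  shows "contains_K4_minus {0..<n} (insert {u,v} (Eg n p a))"
proof -
  have "u \<noteq> w" "u \<noteq> t" "w \<noteq> v" "w \<noteq> t" using assms adjc_irr by metis+
  moreover have "adjc (cl p a w) (cl p a u)" "adjc (cl p a t) (cl p a u)"
    "adjc (cl p a v) (cl p a w)" "adjc (cl p a t) (cl p a w)" using assms adjc_sym by metis+
  ultimately show ?thesis unfolding contains_K4_minus_def
    apply (rule_tac x=u in exI, rule_tac x=w in exI, rule_tac x=v in exI, rule_tac x=t in exI)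
    using assms by (auto simp: mem_Eg insert_commute)
qed


lemma class_cases:
  assumes "i < 8" "j < 8" "i \<le> j" "\<not> adjc i j"
  shows "(i,j) \<in> {(0,3),(0,7),(3,3),(7,7),(4,5),(4,6),(5,6),(6,6),(4,7),(5,7),(6,7),
           (1,2),(1,3),(2,3),(1,5),(1,6),(2,4),(2,6)} \<or> (i = j \<and> i \<in> {0,1,2,4,5})"
proof -
  have "i \<in> {0,1,2,3,4,5,6,7}" "j \<in> {0,1,2,3,4,5,6,7}" using assms(1,2) by auto
  then show ?thesis using assms(3,4)
    apply (simp only: insert_iff empty_iff)
    apply (elim disjE)
    apply (simp_all add: adjc_def AC_def)
    done
qed

lemma sat_ord:
  assumes "p \<ge> 4" "a \<ge> 2" "p + a < n" "u < n" "v < n" "u \<noteq> v"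
    "\<not> adjc (cl p a u) (cl p a v)" "cl p a u \<le> cl p a v"
  shows "contains_K4_minus {0..<n} (insert {u,v} (Eg n p a))"
proof -
  note vals = cl_vals[OF assms(1,2)]
  have bnd: "0 < n" "1 < n" "2 < n" "3 < n" "4 < n" "p+1 < n" "p+2 < n" using assms(1-3) by auto
  have cc: "(cl p a u, cl p a v) \<in> {(0,3),(0,7),(3,3),(7,7),(4,5),(4,6),(5,6),(6,6),(4,7),(5,7),(6,7),
           (1,2),(1,3),(2,3),(1,5),(1,6),(2,4),(2,6)} \<or> (cl p a u = cl p a v \<and> cl p a u \<in> {0,1,2,4,5})"
    using class_cases[OF cl_lt cl_lt assms(8,7)] .
  have same: "\<not> (cl p a u = cl p a v \<and> cl p a u \<in> {0,1,2,4,5})"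
  proof
    assume "cl p a u = cl p a v \<and> cl p a u \<in> {0,1,2,4,5}"
    then have "u = v" using cl_single[of p a u] cl_single[of p a v] by auto
    then show False using assms(6) by simp
  qed
  have c0: "cl p a u = 0 \<Longrightarrow> cl p a v = 3 \<Longrightarrow> ?thesis"
  proof -
    assume h: "cl p a u = 0" "cl p a v = 3"
    show ?thesis
      by (intro patS[of u n v "p+1" "p+2"]) (use assms bnd h in \<open>simp_all add: vals adjc_def AC_def\<close>)
  qed
  have c1: "cl p a u = 0 \<Longrightarrow> cl p a v = 7 \<Longrightarrow> ?thesis"
  proof -
    assume h: "cl p a u = 0" "cl p a v = 7"
    show ?thesis
      by (intro patS[of u n v "1" "2"]) (use assms bnd h in \<open>simp_all add: vals adjc_def AC_def\<close>)
  qed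
  have c2: "cl p a u = 3 \<Longrightarrow> cl p a v = 3 \<Longrightarrow> ?thesis"
  proof -
    assume h: "cl p a u = 3" "cl p a v = 3"
    show ?thesis
      by (intro patS[of u n v "p+1" "p+2"]) (use assms bnd h in \<open>simp_all add: vals adjc_def AC_def\<close>)
  qed
  have c3: "cl p a u = 7 \<Longrightarrow> cl p a v = 7 \<Longrightarrow> ?thesis"
  proof -
    assume h: "cl p a u = 7" "cl p a v = 7"
    show ?thesis
      by (intro patS[of u n v "1" "2"]) (use assms bnd h in \<open>simp_all add: vals adjc_def AC_def\<close>)
  qed
  have c4: "cl p a u = 4 \<Longrightarrow> cl p a v = 5 \<Longrightarrow> ?thesis"
  proof -
    assume h: "cl p a u = 4" "cl p a v = 5"
    show ?thesis
      by (intro patS[of u n v "0" "3"]) (use assms bnd h in \<open>simp_all add: vals adjc_def AC_def\<close>)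
  qed
  have c5: "cl p a u = 4 \<Longrightarrow> cl p a v = 6 \<Longrightarrow> ?thesis"
  proof -
    assume h: "cl p a u = 4" "cl p a v = 6"
    show ?thesis
      by (intro patS[of u n v "0" "3"]) (use assms bnd h in \<open>simp_all add: vals adjc_def AC_def\<close>)
  qed
  have c6: "cl p a u = 5 \<Longrightarrow> cl p a v = 6 \<Longrightarrow> ?thesis"
  proof -
    assume h: "cl p a u = 5" "cl p a v = 6"
    show ?thesis
      by (intro patS[of u n v "0" "3"]) (use assms bnd h in \<open>simp_all add: vals adjc_def AC_def\<close>)
  qed
  have c7: "cl p a u = 6 \<Longrightarrow> cl p a v = 6 \<Longrightarrow> ?thesis"
  proof -
    assume h: "cl p a u = 6" "cl p a v = 6"
    show ?thesis
      by (intro patS[of u n v "0" "3"]) (use assms bnd h in \<open>simp_all add: vals adjc_def AC_def\<close>)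
  qed
  have c8: "cl p a u = 4 \<Longrightarrow> cl p a v = 7 \<Longrightarrow> ?thesis"
  proof -
    assume h: "cl p a u = 4" "cl p a v = 7"
    show ?thesis
      by (intro patS[of u n v "3" "4"]) (use assms bnd h in \<open>simp_all add: vals adjc_def AC_def\<close>)
  qed
  have c9: "cl p a u = 5 \<Longrightarrow> cl p a v = 7 \<Longrightarrow> ?thesis"
  proof -
    assume h: "cl p a u = 5" "cl p a v = 7"
    show ?thesis
      by (intro patS[of u n v "3" "4"]) (use assms bnd h in \<open>simp_all add: vals adjc_def AC_def\<close>)
  qed
  have c10: "cl p a u = 6 \<Longrightarrow> cl p a v = 7 \<Longrightarrow> ?thesis"
  proof -
    assume h: "cl p a u = 6" "cl p a v = 7"
    show ?thesis
      by (intro patS[of u n v "3" "4"]) (use assms bnd h in \<open>simp_all add: vals adjc_def AC_def\<close>)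
  qed
  have c11: "cl p a u = 1 \<Longrightarrow> cl p a v = 2 \<Longrightarrow> ?thesis"
  proof -
    assume h: "cl p a u = 1" "cl p a v = 2"
    have "cl p a v \<noteq> cl p a (p+1)" using h vals by simp
    then have "v \<noteq> p+1" by metis
    with h show ?thesis
      by (intro patT[of u n v "0" "p+1"]) (use assms bnd h in \<open>simp_all add: vals adjc_def AC_def\<close>)
  qed
  have c12: "cl p a u = 1 \<Longrightarrow> cl p a v = 3 \<Longrightarrow> ?thesis"
  proof -
    assume h: "cl p a u = 1" "cl p a v = 3"
    have "cl p a v \<noteq> cl p a (0)" using h vals by simp
    then have "v \<noteq> 0" by metis
    with h show ?thesis
      by (intro patT[of u n v "p+1" "0"]) (use assms bnd h in \<open>simp_all add: vals adjc_def AC_def\<close>)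
  qed
  have c13: "cl p a u = 2 \<Longrightarrow> cl p a v = 3 \<Longrightarrow> ?thesis"
  proof -
    assume h: "cl p a u = 2" "cl p a v = 3"
    have "cl p a v \<noteq> cl p a (0)" using h vals by simp
    then have "v \<noteq> 0" by metis
    with h show ?thesis
      by (intro patT[of u n v "p+2" "0"]) (use assms bnd h in \<open>simp_all add: vals adjc_def AC_def\<close>)
  qed
  have c14: "cl p a u = 1 \<Longrightarrow> cl p a v = 5 \<Longrightarrow> ?thesis"
  proof -
    assume h: "cl p a u = 1" "cl p a v = 5"
    have "cl p a v \<noteq> cl p a (p+1)" using h vals by simp
    then have "v \<noteq> p+1" by metis
    with h show ?thesis
      by (intro patT[of u n v "0" "p+1"]) (use assms bnd h in \<open>simp_all add: vals adjc_def AC_def\<close>)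
  qed
  have c15: "cl p a u = 1 \<Longrightarrow> cl p a v = 6 \<Longrightarrow> ?thesis"
  proof -
    assume h: "cl p a u = 1" "cl p a v = 6"
    have "cl p a v \<noteq> cl p a (p+1)" using h vals by simp
    then have "v \<noteq> p+1" by metis
    with h show ?thesis
      by (intro patT[of u n v "0" "p+1"]) (use assms bnd h in \<open>simp_all add: vals adjc_def AC_def\<close>)
  qed
  have c16: "cl p a u = 2 \<Longrightarrow> cl p a v = 4 \<Longrightarrow> ?thesis"
  proof -
    assume h: "cl p a u = 2" "cl p a v = 4"
    have "cl p a v \<noteq> cl p a (p+2)" using h vals by simp
    then have "v \<noteq> p+2" by metis
    with h show ?thesis
      by (intro patT[of u n v "0" "p+2"]) (use assms bnd h in \<open>simp_all add: vals adjc_def AC_def\<close>)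
  qed
  have c17: "cl p a u = 2 \<Longrightarrow> cl p a v = 6 \<Longrightarrow> ?thesis"
  proof -
    assume h: "cl p a u = 2" "cl p a v = 6"
    have "cl p a v \<noteq> cl p a (p+2)" using h vals by simp
    then have "v \<noteq> p+2" by metis
    with h show ?thesis
      by (intro patT[of u n v "0" "p+2"]) (use assms bnd h in \<open>simp_all add: vals adjc_def AC_def\<close>)
  qed
  from cc same show ?thesis
    apply (simp only: insert_iff empty_iff prod.inject)
    apply (elim disjE conjE)
    by (simp_all add: c0 c1 c2 c3 c4 c5 c6 c7 c8 c9 c10 c11 c12 c13 c14 c15 c16 c17)
qed


lemma cl_iff:
  assumes "p \<ge> 4" "a \<ge> 2"
  shows "cl p a v = 3 \<longleftrightarrow> 3 \<le> v \<and> v \<le> p"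
    "cl p a v = 6 \<longleftrightarrow> p+3 \<le> v \<and> v \<le> p+a"
    "cl p a v = 7 \<longleftrightarrow> p+a < v"
proof -
  show "cl p a v = 3 \<longleftrightarrow> 3 \<le> v \<and> v \<le> p"
  proof
    show "3 \<le> v \<and> v \<le> p \<Longrightarrow> cl p a v = 3" by (simp add: cl_def)
    show "cl p a v = 3 \<Longrightarrow> 3 \<le> v \<and> v \<le> p"
    proof (rule ccontr)
      assume "\<not> (3 \<le> v \<and> v \<le> p)" then show "cl p a v = 3 \<Longrightarrow> False"
        using assms by (simp add: cl_def split: if_split_asm)
    qed
  qed
  show "cl p a v = 6 \<longleftrightarrow> p+3 \<le> v \<and> v \<le> p+a"
  proof
    show "p+3 \<le> v \<and> v \<le> p+a \<Longrightarrow> cl p a v = 6" using assms by (simp add: cl_def)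
    show "cl p a v = 6 \<Longrightarrow> p+3 \<le> v \<and> v \<le> p+a"
    proof (rule ccontr)
      assume "\<not> (p+3 \<le> v \<and> v \<le> p+a)" then show "cl p a v = 6 \<Longrightarrow> False"
        using assms by (simp add: cl_def split: if_split_asm)
    qed
  qed
  show "cl p a v = 7 \<longleftrightarrow> p+a < v"
  proof
    show "p+a < v \<Longrightarrow> cl p a v = 7" using assms by (simp add: cl_def)
    show "cl p a v = 7 \<Longrightarrow> p+a < v"
    proof (rule ccontr)
      assume "\<not> (p+a < v)" then show "cl p a v = 7 \<Longrightarrow> False"
        using assms by (simp add: cl_def split: if_split_asm)
    qed
  qed
qed

lemma cl_simple_iff:
  "cl p a v = 0 \<longleftrightarrow> v = 0" "cl p a v = 1 \<longleftrightarrow> v = 1" "cl p a v = 2 \<longleftrightarrow> v = 2"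
  if "p \<ge> 4" "a \<ge> 2"
  using cl_single[of p a v] cl_vals[OF that] by auto

lemma cl_simple_iff2:
  "cl p a v = 4 \<longleftrightarrow> v = p+1" "cl p a v = 5 \<longleftrightarrow> v = p+2"
  if "p \<ge> 4" "a \<ge> 2"
  using cl_single[of p a v] cl_vals[OF that] by auto


definition pr :: "nat set \<Rightarrow> nat set \<Rightarrow> nat set set" where
  "pr S T = {{x,y} | x y. x \<in> S \<and> y \<in> T}"

lemma pr_I: "x \<in> S \<Longrightarrow> y \<in> T \<Longrightarrow> {x,y} \<in> pr S T" unfolding pr_def by blast
lemma pr_I2: "x \<in> S \<Longrightarrow> y \<in> T \<Longrightarrow> {y,x} \<in> pr S T" unfolding pr_def by (auto simp: insert_commute)

lemma pr_iff: "{x,y} \<in> pr S T \<longleftrightarrow> (x \<in> S \<and> y \<in> T) \<or> (y \<in> S \<and> x \<in> T)"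
proof
  assume "{x,y} \<in> pr S T"
  then obtain u v where h: "{x,y} = {u,v}" "u \<in> S" "v \<in> T" unfolding pr_def by blast
  from h(1) have "(x = u \<and> y = v) \<or> (x = v \<and> y = u)" by (simp add: doubleton_eq_iff)
  then show "(x \<in> S \<and> y \<in> T) \<or> (y \<in> S \<and> x \<in> T)" using h by blast
next
  assume "(x \<in> S \<and> y \<in> T) \<or> (y \<in> S \<and> x \<in> T)"
  then show "{x,y} \<in> pr S T" using pr_I pr_I2 by blast
qed

definition U :: "nat \<Rightarrow> nat \<Rightarrow> nat \<Rightarrow> nat set set" where
  "U n p a = pr {0} ({1,2} \<union> {p+1..p+a}) \<union> pr {1} (insert (p+1) {p+a+1..<n})
     \<union> pr {2} (insert (p+2) {p+a+1..<n}) \<union> pr {3..p} {p+1..<n}"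

lemma AC_U:
  assumes "p \<ge> 4" "a \<ge> 2" "x < n" "y < n" "(cl p a x, cl p a y) \<in> AC"
  shows "{x,y} \<in> U n p a"
proof -
  note ci = cl_iff[OF assms(1,2)] cl_simple_iff[OF assms(1,2)] cl_simple_iff2[OF assms(1,2)]
  show ?thesis using assms(5) unfolding AC_def
    apply (simp only: insert_iff empty_iff prod.inject)
    apply (elim disjE conjE)
    apply (simp_all only: ci)
    using assms(1-4) apply (simp_all add: U_def pr_iff)
    done
qed


lemma U_Eg:
  assumes "p \<ge> 4" "a \<ge> 2" "p + a < n" "e \<in> U n p a"
  shows "e \<in> Eg n p a"
proof -
  have "\<exists>x y. e = {x,y} \<and> ((x = 0 \<and> y \<in> {1,2} \<union> {p+1..p+a}) \<or> (x = 1 \<and> y \<in> insert (p+1) {p+a+1..<n})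
     \<or> (x = 2 \<and> y \<in> insert (p+2) {p+a+1..<n}) \<or> (x \<in> {3..p} \<and> y \<in> {p+1..<n}))"
    using assms(4) unfolding U_def pr_def by blast
  then obtain x y where e: "e = {x,y}" and
    h: "(x = 0 \<and> y \<in> {1,2} \<union> {p+1..p+a}) \<or> (x = 1 \<and> y \<in> insert (p+1) {p+a+1..<n})
     \<or> (x = 2 \<and> y \<in> insert (p+2) {p+a+1..<n}) \<or> (x \<in> {3..p} \<and> y \<in> {p+1..<n})" by blast
  have "x < n \<and> y < n \<and> adjc (cl p a x) (cl p a y)"
    using h assms(1-3) by (auto simp: cl_def adjc_def AC_def)
  then show ?thesis unfolding e mem_Eg .
qed

lemma Eg_U:
  assumes "p \<ge> 4" "a \<ge> 2" "p + a < n"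
  shows "Eg n p a = U n p a"
proof
  show "U n p a \<subseteq> Eg n p a" using U_Eg[OF assms] by blast
  show "Eg n p a \<subseteq> U n p a"
  proof
    fix e assume "e \<in> Eg n p a"
    then obtain x y where e: "e = {x,y}" "x < n" "y < n" "adjc (cl p a x) (cl p a y)"
      unfolding Eg_def by blast
    from e(4) consider "(cl p a x, cl p a y) \<in> AC" | "(cl p a y, cl p a x) \<in> AC"
      unfolding adjc_def by blast
    then show "e \<in> U n p a"
    proof cases
      case 1 then show ?thesis using AC_U[OF assms(1,2) e(2,3)] e(1) by simp
    next
      case 2 then show ?thesis using AC_U[OF assms(1,2) e(3,2)] e(1) by (simp add: insert_commute)
    qed
  qed
qed


lemma pr_card:
  assumes "finite S" "finite T" "S \<inter> T = {}"
  shows "card (pr S T) = card S * card T"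
proof -
  have eq: "pr S T = (\<lambda>(x,y). {x,y}) ` (S \<times> T)" unfolding pr_def by auto
  have "inj_on (\<lambda>(x,y). {x,y}) (S \<times> T)"
  proof (rule inj_onI, clarify)
    fix x y x' y' assume h: "x \<in> S" "y \<in> T" "x' \<in> S" "y' \<in> T" "{x,y} = {x',y'}"
    then have "(x = x' \<and> y = y') \<or> (x = y' \<and> y = x')" by (simp add: doubleton_eq_iff)
    then show "x = x' \<and> y = y'" using h assms(3) by blast
  qed
  then show ?thesis unfolding eq by (simp add: card_image card_cartesian_product)
qed

lemma pr_sub: "e \<in> pr S T \<Longrightarrow> e \<subseteq> S \<union> T \<and> (\<exists>x\<in>S. x \<in> e)"
  unfolding pr_def by blast

lemma pr_notin: "e \<in> pr S T \<Longrightarrow> x \<notin> S \<Longrightarrow> x \<notin> T \<Longrightarrow> x \<notin> e"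
  unfolding pr_def by blast

lemma pr_fin: "finite S \<Longrightarrow> finite T \<Longrightarrow> finite (pr S T)"
proof -
  assume "finite S" "finite T"
  moreover have "pr S T = (\<lambda>(x,y). {x,y}) ` (S \<times> T)" unfolding pr_def by auto
  ultimately show ?thesis by simp
qed

lemma card_U:
  assumes "p \<ge> 4" "a \<ge> 2" "p + a < n"
  shows "card (U n p a) = (2 + a) + 2 * (1 + (n - (p+a+1))) + (p - 2) * (n - (p+1))"
proof -
  define A1 where "A1 = pr {0} ({1,2} \<union> {p+1..p+a})"
  define A2 where "A2 = pr {1} (insert (p+1) {p+a+1..<n})"
  define A3 where "A3 = pr {2} (insert (p+2) {p+a+1..<n})"
  define A4 where "A4 = pr {3..p} {p+1..<n}"
  have c1: "card A1 = 2 + a"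
  proof -
    have "card ({1,2} \<union> {p+1..p+a}) = 2 + a"
      using assms by (subst card_Un_disjoint) auto
    then show ?thesis unfolding A1_def using assms by (subst pr_card) auto
  qed
  have c2: "card A2 = 1 + (n - (p+a+1))"
    unfolding A2_def using assms by (subst pr_card) auto
  have c3: "card A3 = 1 + (n - (p+a+1))"
    unfolding A3_def using assms by (subst pr_card) auto
  have c4: "card A4 = (p - 2) * (n - (p+1))"
    unfolding A4_def using assms by (subst pr_card) auto
  have f: "finite A1" "finite A2" "finite A3" "finite A4"
    unfolding A1_def A2_def A3_def A4_def by (auto intro!: pr_fin)
  have d1: "A1 \<inter> A2 = {}"
  proof -
    have "0 \<in> e" if "e \<in> A1" for e using pr_sub[OF that[unfolded A1_def]] by auto
    moreover have "0 \<notin> e" if "e \<in> A2" for e using pr_notin[OF that[unfolded A2_def], of 0] assms by auto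
    ultimately show ?thesis by blast
  qed
  have d2: "(A1 \<union> A2) \<inter> A3 = {}"
  proof -
    have "0 \<in> e \<or> 1 \<in> e" if "e \<in> A1 \<union> A2" for e
      using that pr_sub[of e "{0}"] pr_sub[of e "{1}"] unfolding A1_def A2_def by blast
    moreover have "0 \<notin> e \<and> 1 \<notin> e" if "e \<in> A3" for e using pr_notin[OF that[unfolded A3_def], of 0] pr_notin[OF that[unfolded A3_def], of 1] assms by auto
    ultimately show ?thesis by blast
  qed
  have d3: "(A1 \<union> A2 \<union> A3) \<inter> A4 = {}"
  proof -
    have "0 \<in> e \<or> 1 \<in> e \<or> 2 \<in> e" if "e \<in> A1 \<union> A2 \<union> A3" for e
      using that pr_sub[of e "{0}"] pr_sub[of e "{1}"] pr_sub[of e "{2}"]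
      unfolding A1_def A2_def A3_def by blast
    moreover have "0 \<notin> e \<and> 1 \<notin> e \<and> 2 \<notin> e" if "e \<in> A4" for e
      using pr_notin[OF that[unfolded A4_def], of 0] pr_notin[OF that[unfolded A4_def], of 1] pr_notin[OF that[unfolded A4_def], of 2] assms by auto
    ultimately show ?thesis by blast
  qed
  have "U n p a = A1 \<union> A2 \<union> A3 \<union> A4" unfolding U_def A1_def A2_def A3_def A4_def by simp
  then have "card (U n p a) = card A1 + card A2 + card A3 + card A4"
    using f d1 d2 d3 by (simp add: card_Un_disjoint)
  then show ?thesis using c1 c2 c3 c4 by simp
qed


lemma edge_split: "card ({x,y} \<inter> A) = 1 \<Longrightarrow> x \<noteq> y \<Longrightarrow> (x \<in> A \<longleftrightarrow> y \<notin> A)"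
  by (cases "x \<in> A"; cases "y \<in> A") auto

lemma constr:
  assumes "p \<ge> 4" "a \<ge> 2" "p + a < n"
  shows "simple_graph {0..<n} (Eg n p a) \<and>
    card (Eg n p a) = (2 + a) + 2 * (1 + (n - (p+a+1))) + (p - 2) * (n - (p+1)) \<and>
    K4_minus_saturated {0..<n} (Eg n p a) \<and> \<not> bipartite {0..<n} (Eg n p a)"
proof (intro conjI)
  show "simple_graph {0..<n} (Eg n p a)"
    unfolding simple_graph_def
  proof (intro conjI ballI)
    fix e assume "e \<in> Eg n p a"
    then obtain x y where e: "e = {x,y}" "x < n" "y < n" "adjc (cl p a x) (cl p a y)"
      unfolding Eg_def by blast
    have "x \<noteq> y" using e(4) adjc_irr by metis
    then show "\<exists>u v. u \<in> {0..<n} \<and> v \<in> {0..<n} \<and> u \<noteq> v \<and> e = {u, v}" using e by auto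
  qed simp
  show "card (Eg n p a) = (2 + a) + 2 * (1 + (n - (p+a+1))) + (p - 2) * (n - (p+1))"
    using Eg_U[OF assms] card_U[OF assms] by simp
  show "K4_minus_saturated {0..<n} (Eg n p a)"
    unfolding K4_minus_saturated_def
  proof (intro conjI ballI impI)
    show "\<not> contains_K4_minus {0..<n} (Eg n p a)" using K4free[OF assms(1,2)] .
    fix u v assume uv: "u \<in> {0..<n}" "v \<in> {0..<n}" "u \<noteq> v \<and> {u, v} \<notin> Eg n p a"
    then have na: "\<not> adjc (cl p a u) (cl p a v)" using mem_Eg by auto
    show "contains_K4_minus {0..<n} (insert {u, v} (Eg n p a))"
    proof (cases "cl p a u \<le> cl p a v")
      case True then show ?thesis using sat_ord[OF assms, of u v] uv na by auto
    next
      case False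
      then have "contains_K4_minus {0..<n} (insert {v, u} (Eg n p a))"
        using sat_ord[OF assms, of v u] uv na adjc_sym by auto
      then show ?thesis by (simp add: insert_commute)
    qed
  qed
  show "\<not> bipartite {0..<n} (Eg n p a)"
  proof
    assume "bipartite {0..<n} (Eg n p a)"
    then obtain A where A: "\<forall>e\<in>Eg n p a. card (e \<inter> A) = 1" unfolding bipartite_def by blast
    note vals = cl_vals[OF assms(1,2)]
    have "{0, 1} \<in> Eg n p a" "{0, p+1} \<in> Eg n p a" "{1, p+1} \<in> Eg n p a"
      using assms by (simp_all add: mem_Eg vals adjc_def AC_def)
    then have c: "card ({0, 1} \<inter> A) = 1" "card ({0, p+1} \<inter> A) = 1" "card ({1, p+1} \<inter> A) = 1"
      using A by blast+
    have "(0 \<in> A \<longleftrightarrow> 1 \<notin> A)" "(0 \<in> A \<longleftrightarrow> p+1 \<notin> A)" "(1 \<in> A \<longleftrightarrow> p+1 \<notin> A)"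
      using edge_split[OF c(1)] edge_split[OF c(2)] edge_split[OF c(3)] assms by auto
    then show False by blast
  qed
qed

theorem theorem1p2:
  fixes n m :: nat
  assumes "n \<ge> 10"
    and "3 * n - 11 \<le> m"
    and "m \<le> ((n - 1) div 2) * ((n - 1) - (n - 1) div 2) + 2"
  shows "\<exists>E :: nat set set. simple_graph {0..<n} E \<and> card E = m \<and>
           K4_minus_saturated {0..<n} E \<and> \<not> bipartite {0..<n} E"
proof -
  define P where "P p \<longleftrightarrow> 4 \<le> p \<and> m \<le> p * (n - 1 - p) + 2" for p
  define p0 where "p0 = (n - 1) div 2"
  have P0: "P p0" unfolding P_def p0_def using assms by auto
  define p where "p = (LEAST p. P p)"
  have Pp: "P p" unfolding p_def using P0 by (rule LeastI)
  have ple: "p \<le> p0" unfolding p_def using P0 by (rule Least_le)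
  have p4: "p \<ge> 4" and mle: "m \<le> p * (n - 1 - p) + 2" using Pp unfolding P_def by auto
  have pn: "p + 1 < n" using ple assms(1) unfolding p0_def by auto
  define q where "q = n - 1 - p"
  have nq: "n = p + q + 1" unfolding q_def using pn by auto
  define p' where "p' = p - 2"
  have p': "p = p' + 2" unfolding p'_def using p4 by simp
  have mge: "(p - 1) * q + 4 \<le> m"
  proof (cases "p = 4")
    case True then show ?thesis using assms(2) nq by simp
  next
    case False
    have "p - 1 < p" using p4 by simp
    then have "\<not> P (p - 1)" unfolding p_def by (rule not_less_Least)
    then have "m > (p - 1) * (n - 1 - (p - 1)) + 2" using False p4 unfolding P_def by auto
    moreover have "n - 1 - (p - 1) = q + 1" using nq p4 by auto
    ultimately have "m > (p - 1) * (q + 1) + 2" by (simp only:)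
    moreover have "(p - 1) * (q + 1) = p' * q + q + p' + 1" "(p - 1) * q = p' * q + q"
      using p' by (simp_all add: algebra_simps)
    ultimately show ?thesis using p4 p' by linarith
  qed
  define a where "a = p * q + 4 - m"
  have mle': "m \<le> p * q + 2" using mle q_def by simp
  have e1: "p * q = p' * q + 2 * q" "(p - 1) * q = p' * q + q" using p' by (simp_all add: algebra_simps)
  have a2: "a \<ge> 2" and aq: "a \<le> q" using mle' mge e1 unfolding a_def by linarith+
  have pa: "p + a < n" using aq nq by simp
  have "(2 + a) + 2 * (1 + (n - (p+a+1))) + (p - 2) * (n - (p+1)) = m"
  proof -
    have "n - (p+a+1) = q - a" "n - (p+1) = q" "p - 2 = p'" using nq p' by auto
    then show ?thesis using aq mle' mge e1 unfolding a_def by simp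
  qed
  then show ?thesis using constr[OF p4 a2 pa] by metis
qed

end
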